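(* Let $\pi$ be a projective plane of order $q$, let $2\le n\le q$, and let $\phi$ be an embedding of the complete bipartite graph $K_{n,q}$ into $\pi$, where $U$ and $V$ are the two classes of $K_{n,q}$ with $|U|=n$ and $|V|=q$. Then the points of $\phi(U)$ are collinear.
   Context: A finite projective plane of order $q$ has $q^2+q+1$ points and lines, $q+1$ points on each line and $q+1$ lines through each point; any two distinct points lie on a unique line and any two lines meet in a unique point. An embedding of a simple graph $G=(V,E)$ into a projective plane is an injective map $\phi$ from $V$ to the points such that the induced map sending an edge $ab$ to the line through $\phi(a),\phi(b)$ is injective on $E$. *)

theory Defs
  imports Main
begin

definition projective_plane ::
  "'p set \<Rightarrow> 'l set \<Rightarrow> ('p \<Rightarrow> 'l \<Rightarrow> bool) \<Rightarrow> nat \<Rightarrow> bool" where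
  "projective_plane P L inc q \<longleftrightarrow>
     finite P \<and> finite L \<and>
     card P = q^2 + q + 1 \<and> card L = q^2 + q + 1 \<and>
     (\<forall>l\<in>L. card {p\<in>P. inc p l} = q + 1) \<and>
     (\<forall>p\<in>P. card {l\<in>L. inc p l} = q + 1) \<and>
     (\<forall>p\<in>P. \<forall>p'\<in>P. p \<noteq> p' \<longrightarrow> (\<exists>!l. l \<in> L \<and> inc p l \<and> inc p' l)) \<and>
     (\<forall>l\<in>L. \<forall>l'\<in>L. l \<noteq> l' \<longrightarrow> (\<exists>!p. p \<in> P \<and> inc p l \<and> inc p l'))"

definition edge_line ::
  "'l set \<Rightarrow> ('p \<Rightarrow> 'l \<Rightarrow> bool) \<Rightarrow> ('v \<Rightarrow> 'p) \<Rightarrow> 'v set \<Rightarrow> 'l" where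
  "edge_line L inc \<phi> e = (THE l. l \<in> L \<and> (\<forall>x\<in>e. inc (\<phi> x) l))"

text \<open>Embedding of a simple graph (V, E), edges being 2-element subsets of V.\<close>
definition graph_embedding ::
  "'p set \<Rightarrow> 'l set \<Rightarrow> ('p \<Rightarrow> 'l \<Rightarrow> bool) \<Rightarrow> 'v set \<Rightarrow> 'v set set \<Rightarrow> ('v \<Rightarrow> 'p) \<Rightarrow> bool" where
  "graph_embedding P L inc V E \<phi> \<longleftrightarrow>
     inj_on \<phi> V \<and> \<phi> ` V \<subseteq> P \<and> inj_on (edge_line L inc \<phi>) E"

definition complete_bipartite_edges :: "'v set \<Rightarrow> 'v set \<Rightarrow> 'v set set" where
  "complete_bipartite_edges U W = {{u, w} | u w. u \<in> U \<and> w \<in> W}"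

end

theory Submission
  imports Defs
begin

lemma edge_line_pair:
  assumes "l \<in> L" "inc a l" "inc b l" "a \<noteq> b"
    and uniq: "\<And>l'. l' \<in> L \<Longrightarrow> inc a l' \<Longrightarrow> inc b l' \<Longrightarrow> l' = l"
    and "\<phi> x = a" "\<phi> y = b"
  shows "edge_line L inc \<phi> {x, y} = l"
  unfolding edge_line_def
proof (rule the_equality)
  show "l \<in> L \<and> (\<forall>z\<in>{x, y}. inc (\<phi> z) l)" using assms(1-3,6,7) by simp
next
  fix l' assume "l' \<in> L \<and> (\<forall>z\<in>{x, y}. inc (\<phi> z) l')"
  then have "l' \<in> L" "inc a l'" "inc b l'" using assms(6,7) by auto
  then show "l' = l" by (rule uniq)
qed

theorem lemma3p4:
  fixes P :: "'p set" and L :: "'l set" and inc :: "'p \<Rightarrow> 'l \<Rightarrow> bool"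
    and U V :: "'v set" and \<phi> :: "'v \<Rightarrow> 'p" and q n :: nat
  assumes "projective_plane P L inc q"
    and "2 \<le> n" and "n \<le> q"
    and "finite U" and "finite V" and "U \<inter> V = {}"
    and "card U = n" and "card V = q"
    and "graph_embedding P L inc (U \<union> V) (complete_bipartite_edges U V) \<phi>"
  shows "\<exists>l\<in>L. \<forall>u\<in>U. inc (\<phi> u) l"
proof -
  note pp = assms(1)[unfolded projective_plane_def]
  have finL: "finite L" using pp apply (elim conjE) by assumption
  have ptcard0: "\<forall>p\<in>P. card {l\<in>L. inc p l} = q + 1" using pp apply (elim conjE) by assumption
  have ptcard: "\<And>p. p \<in> P \<Longrightarrow> card {l\<in>L. inc p l} = q + 1" using ptcard0 by simp
  have line0: "\<forall>p\<in>P. \<forall>p'\<in>P. p \<noteq> p' \<longrightarrow> (\<exists>!l. l \<in> L \<and> inc p l \<and> inc p' l)"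
    using pp apply (elim conjE) by assumption
  have line1: "\<exists>!l. l \<in> L \<and> inc a l \<and> inc b l" if "a \<in> P" "b \<in> P" "a \<noteq> b" for a b
    using line0 that by simp
  have line: "\<exists>l. l \<in> L \<and> inc a l \<and> inc b l \<and> (\<forall>l'. l' \<in> L \<and> inc a l' \<and> inc b l' \<longrightarrow> l' = l)"
    if "a \<in> P" "b \<in> P" "a \<noteq> b" for a b
    using line1[OF that] by (elim ex1E) blast
  note ge = assms(9)[unfolded graph_embedding_def]
  have inj: "inj_on \<phi> (U \<union> V)" and PP: "\<phi> ` (U \<union> V) \<subseteq> P"
    and einj: "inj_on (edge_line L inc \<phi>) (complete_bipartite_edges U V)" using ge by auto
  have card2: "2 \<le> card U" using assms by simp
  then have "U \<noteq> {}" by auto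
  then obtain u1 where u1: "u1 \<in> U" by blast
  have "card (U - {u1}) \<ge> 1" using card2 u1 assms(4) by simp
  then have "U - {u1} \<noteq> {}" by (metis card.empty not_one_le_zero)
  then obtain u2 where u2: "u2 \<in> U" "u2 \<noteq> u1" by blast
  define p where "p = \<phi> u1"
  have pP: "p \<in> P" using PP u1 p_def by auto
  define f where "f v = edge_line L inc \<phi> {u1, v}" for v
  have fprops: "f v \<in> L \<and> inc p (f v) \<and> inc (\<phi> v) (f v)
      \<and> (\<forall>l'. l' \<in> L \<and> inc p l' \<and> inc (\<phi> v) l' \<longrightarrow> l' = f v)" if v: "v \<in> V" for v
  proof -
    have vP: "\<phi> v \<in> P" using PP v by auto
    have "u1 \<noteq> v" using u1 v assms(6) by auto
    then have ne: "p \<noteq> \<phi> v" unfolding p_def using inj_onD[OF inj _ UnI1[OF u1] UnI2[OF v]] by auto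
    obtain l where l: "l \<in> L" "inc p l" "inc (\<phi> v) l"
      and uq: "\<And>l'. l' \<in> L \<Longrightarrow> inc p l' \<Longrightarrow> inc (\<phi> v) l' \<Longrightarrow> l' = l"
      using line[OF pP vP ne] by blast
    have "f v = l" unfolding f_def
      by (rule edge_line_pair[where L=L and inc=inc and \<phi>=\<phi> and x=u1 and y=v, OF l ne uq]) (auto simp: p_def)
    then show ?thesis using l uq by blast
  qed
  have mem: "{u, v} \<in> complete_bipartite_edges U V" if "u \<in> U" "v \<in> V" for u v
    unfolding complete_bipartite_edges_def using that by blast
  have finj: "inj_on f V"
  proof
    fix v w assume vw: "v \<in> V" "w \<in> V" "f v = f w"
    have "{u1, v} = {u1, w}"
      using inj_onD[OF einj _ mem[OF u1 vw(1)] mem[OF u1 vw(2)]] vw(3) unfolding f_def by simp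
    moreover have "v \<noteq> u1" "w \<noteq> u1" using vw u1 assms(6) by auto
    ultimately show "v = w" by (auto simp: doubleton_eq_iff)
  qed
  have key: "\<exists>m\<in>L. inc p m \<and> inc (\<phi> u) m \<and> (\<forall>v\<in>V. \<not> inc (\<phi> v) m)"
    if u: "u \<in> U" "u \<noteq> u1" for u
  proof -
    have uP: "\<phi> u \<in> P" using PP u by auto
    have ne: "p \<noteq> \<phi> u" unfolding p_def using inj_onD[OF inj _ UnI1[OF u1] UnI1[OF u(1)]] u(2) by auto
    obtain m where m: "m \<in> L" "inc p m" "inc (\<phi> u) m"
      and uq: "\<And>l'. l' \<in> L \<Longrightarrow> inc p l' \<Longrightarrow> inc (\<phi> u) l' \<Longrightarrow> l' = m"
      using line[OF pP uP ne] by blast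
    have "\<not> inc (\<phi> v) m" if v: "v \<in> V" for v
    proof
      assume iv: "inc (\<phi> v) m"
      have vP: "\<phi> v \<in> P" using PP v by auto
      have "u \<noteq> v" using u v assms(6) by auto
      then have ne2: "\<phi> u \<noteq> \<phi> v" using inj_onD[OF inj _ UnI1[OF u(1)] UnI2[OF v]] by auto
      have e1: "f v = m" using fprops[OF v] m iv by blast
      have e2: "edge_line L inc \<phi> {u, v} = m"
      proof (rule edge_line_pair[where L=L and inc=inc and \<phi>=\<phi> and x=u and y=v, OF m(1) m(3) iv ne2])
        fix l' assume "l' \<in> L" "inc (\<phi> u) l'" "inc (\<phi> v) l'"
        then show "l' = m"
          using line[OF uP vP ne2] m iv by (elim exE) (metis)
      qed auto
      have "{u1, v} = {u, v}"
        using inj_onD[OF einj _ mem[OF u1 v] mem[OF u(1) v]] e1 e2 unfolding f_def by simp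
      then show False using u(2) by (simp add: doubleton_eq_iff)
    qed
    then show ?thesis using m by blast
  qed
  obtain m0 where m0: "m0 \<in> L" "inc p m0" "inc (\<phi> u2) m0" "\<forall>v\<in>V. \<not> inc (\<phi> v) m0"
    using key[OF u2] by blast
  have "\<forall>u\<in>U. inc (\<phi> u) m0"
  proof
    fix u assume u: "u \<in> U"
    show "inc (\<phi> u) m0"
    proof (cases "u = u1")
      case True then show ?thesis using m0 p_def by simp
    next
      case False
      obtain m where m: "m \<in> L" "inc p m" "inc (\<phi> u) m" "\<forall>v\<in>V. \<not> inc (\<phi> v) m"
        using key[OF u False] by blast
      show ?thesis
      proof (rule ccontr)
        assume "\<not> inc (\<phi> u) m0"
        then have mm: "m \<noteq> m0" using m by auto
        have fV: "f ` V \<subseteq> {l\<in>L. inc p l}" using fprops by blast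
        have sub: "insert m (insert m0 (f ` V)) \<subseteq> {l\<in>L. inc p l}"
          using m m0 fV by blast
        have nm: "m \<notin> f ` V" "m0 \<notin> f ` V" using m(4) m0(4) fprops by blast+
        have "card (insert m (insert m0 (f ` V))) = q + 2"
          using mm nm card_image[OF finj] assms(5,8) by simp
        moreover have "card (insert m (insert m0 (f ` V))) \<le> q + 1"
          using card_mono[OF _ sub] finL ptcard[OF pP] by simp
        ultimately show False by simp
      qed
    qed
  qed
  then show ?thesis using m0 by blast
qed

end
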